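(* If two augmentations $\epsilon_1,\epsilon_2:\mathrm{Cord}(L)\to k$ are equivalent under the dilation action, then their augmentation representations $(\rho^{sub}_{\epsilon_1},V^{sub}_{\epsilon_1})$ and $(\rho^{sub}_{\epsilon_2},V^{sub}_{\epsilon_2})$ are isomorphic as representations of $\pi_L=\pi_1(X\setminus L)$.
   Context: $X=\mathbb{R}^3$ or $S^3$, $k$ a field, $(L,L')$ an $r$-component framed oriented link with framed cord algebra $\mathrm{Cord}(L)$ (generated by homotopy classes of framed cords — paths in $X\setminus L$ with endpoints on the framing $L'$ — and $\lambda_s^{\pm1},\mu_s^{\pm1}$, modulo normalization, meridian, longitude and skein relations); an augmentation is a unital ring map $\epsilon:\mathrm{Cord}(L)\to k$. A dilation $d\in(k^* )^r$ acts by $\epsilon'(c_{st})=\frac{d_s}{d_t}\epsilon(c_{st})$ on cords from the framing of $K_s$ to that of $K_t$, fixing $\epsilon(\lambda_s),\epsilon(\mu_s)$. $L$ is the closure of an $n$-strand braid $B$, a disk $D$ transverse to the braid meets the framing at $x_1,\dots,x_n$, strand $i$ lies on $K_{\{i\}}$; $\gamma_{ij}$ is the straight segment in $D$ from $x_i$ to $x_j$ and $R$ is the $n\times n$ matrix $R_{ij}=\epsilon(\gamma_{ij})$ with columns $R_j\in k^n$. Fix a base point $x_0\in D$, a path $p_1$ from $x_1$ to $x_0$ and set $p_i=\gamma_{i1}\cdot p_1$. For $h\in\pi_1(X\setminus L,x_0)$ let $R^h$ be the $n\times n$ matrix with entries $R^h_{ij}=\epsilon(p_i^{-1}\cdot h\cdot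 p_j)$ (a framed cord from $x_i$ to $x_j$). The augmentation representation is $V^{sub}_\epsilon=\mathrm{Span}_k\{R_1,\dots,R_n\}\subset k^n$ with $\rho^{sub}_\epsilon(h)R_j:=R^h_j$ (the $j$-th column of $R^h$); by prior work this is a well-defined representation of $\pi_L$. *)

theory Defs
  imports "HOL-Algebra.Group"
begin

text \<open>Abstract model of the augmentation representation.
  Vectors of k^n are functions nat => k that vanish outside {1..n}.
  A matrix is a function nat => nat => k (entries M i j, 1 <= i,j <= n).\<close>

definition lincomb :: "nat \<Rightarrow> (nat \<Rightarrow> nat \<Rightarrow> 'k::field) \<Rightarrow> (nat \<Rightarrow> 'k) \<Rightarrow> (nat \<Rightarrow> 'k)" where
  "lincomb n M c = (\<lambda>i. if i \<in> {1..n} then (\<Sum>j\<in>{1..n}. c j * M i j) else 0)"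

definition Vsub :: "nat \<Rightarrow> (nat \<Rightarrow> nat \<Rightarrow> 'k::field) \<Rightarrow> (nat \<Rightarrow> 'k) set" where
  "Vsub n M = range (lincomb n M)"

definition rho_sub :: "nat \<Rightarrow> (nat \<Rightarrow> nat \<Rightarrow> 'k::field) \<Rightarrow> (nat \<Rightarrow> nat \<Rightarrow> 'k) \<Rightarrow> (nat \<Rightarrow> 'k) \<Rightarrow> (nat \<Rightarrow> 'k)" where
  "rho_sub n M Mh v = lincomb n Mh (SOME c. v = lincomb n M c)"

text \<open>Well-definedness of rho_sub (the result of prior work).\<close>
definition rho_well_defined :: "nat \<Rightarrow> (nat \<Rightarrow> nat \<Rightarrow> 'k::field) \<Rightarrow> (nat \<Rightarrow> nat \<Rightarrow> 'k) \<Rightarrow> bool" where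
  "rho_well_defined n M Mh \<longleftrightarrow> (\<forall>c. lincomb n M c = (\<lambda>_. 0) \<longrightarrow> lincomb n Mh c = (\<lambda>_. 0))"

definition rep_iso :: "('g, 'b) monoid_scheme \<Rightarrow> (nat \<Rightarrow> 'k::field) set \<Rightarrow> ('g \<Rightarrow> (nat \<Rightarrow> 'k) \<Rightarrow> (nat \<Rightarrow> 'k))
      \<Rightarrow> (nat \<Rightarrow> 'k) set \<Rightarrow> ('g \<Rightarrow> (nat \<Rightarrow> 'k) \<Rightarrow> (nat \<Rightarrow> 'k)) \<Rightarrow> bool" where
  "rep_iso G V1 r1 V2 r2 \<longleftrightarrow> (\<exists>T. bij_betw T V1 V2
      \<and> (\<forall>u\<in>V1. \<forall>v\<in>V1. T (\<lambda>i. u i + v i) = (\<lambda>i. T u i + T v i))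
      \<and> (\<forall>a. \<forall>u\<in>V1. T (\<lambda>i. a * u i) = (\<lambda>i. a * T u i))
      \<and> (\<forall>h\<in>carrier G. \<forall>v\<in>V1. T (r1 h v) = r2 h (T v)))"

end

theory Submission
  imports Defs
begin

lemma lincomb_diff:
  "lincomb n M (\<lambda>j. c j - c' j) = (\<lambda>i. lincomb n M c i - lincomb n M c' i)"
  by (auto simp: lincomb_def algebra_simps sum_subtractf)

lemma wd_eq:
  assumes "rho_well_defined n M Mh" "lincomb n M c = lincomb n M c'"
  shows "lincomb n Mh c = lincomb n Mh c'"
proof -
  have "lincomb n M (\<lambda>j. c j - c' j) = (\<lambda>_. 0)"
    using assms(2) by (simp add: lincomb_diff)
  then have "lincomb n Mh (\<lambda>j. c j - c' j) = (\<lambda>_. 0)"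
    using assms(1) by (simp add: rho_well_defined_def)
  then have "\<forall>i. lincomb n Mh c i - lincomb n Mh c' i = 0"
    by (simp add: lincomb_diff fun_eq_iff)
  then show ?thesis by (simp add: fun_eq_iff)
qed

lemma rho_sub_eq:
  assumes "rho_well_defined n M Mh"
  shows "rho_sub n M Mh (lincomb n M c) = lincomb n Mh c"
proof -
  have "lincomb n M c = lincomb n M (SOME c0. lincomb n M c = lincomb n M c0)"
    by (rule someI[of "\<lambda>c0. lincomb n M c = lincomb n M c0" c]) simp
  then show ?thesis unfolding rho_sub_def using wd_eq[OF assms] by metis
qed

definition TD :: "nat \<Rightarrow> (nat \<Rightarrow> 'k::field) \<Rightarrow> (nat \<Rightarrow> 'k) \<Rightarrow> (nat \<Rightarrow> 'k)" where
  "TD n D v = (\<lambda>i. if i \<in> {1..n} then D i * v i else 0)"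

lemma TD_lincomb:
  assumes nz: "\<And>j. j \<in> {1..n} \<Longrightarrow> D j \<noteq> 0"
    and M: "\<And>i j. i \<in> {1..n} \<Longrightarrow> j \<in> {1..n} \<Longrightarrow> M2 i j = D i / D j * M1 i j"
  shows "TD n D (lincomb n M1 c) = lincomb n M2 (\<lambda>j. c j * D j)"
proof
  fix i
  show "TD n D (lincomb n M1 c) i = lincomb n M2 (\<lambda>j. c j * D j) i"
  proof (cases "i \<in> {1..n}")
    case True
    have "D i * (\<Sum>j\<in>{1..n}. c j * M1 i j) = (\<Sum>j\<in>{1..n}. c j * D j * M2 i j)"
      unfolding sum_distrib_left
    proof (rule sum.cong)
      fix j assume j: "j \<in> {1..n}"
      show "D i * (c j * M1 i j) = c j * D j * M2 i j"
        using M[OF True j] nz[OF j] by (simp add: field_simps)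
    qed simp
    then show ?thesis using True by (simp add: TD_def lincomb_def)
  next
    case False
    then show ?thesis unfolding TD_def lincomb_def by auto
  qed
qed

lemma TD_lincomb':
  assumes nz: "\<And>j. j \<in> {1..n} \<Longrightarrow> D j \<noteq> 0"
    and M: "\<And>i j. i \<in> {1..n} \<Longrightarrow> j \<in> {1..n} \<Longrightarrow> M2 i j = D i / D j * M1 i j"
  shows "lincomb n M2 c = TD n D (lincomb n M1 (\<lambda>j. c j / D j))"
proof -
  have "lincomb n M2 c = lincomb n M2 (\<lambda>j. c j / D j * D j)"
    using nz by (auto simp: lincomb_def intro!: sum.cong)
  then show ?thesis using TD_lincomb[where n=n and D=D, OF nz M] by simp
qed

lemma TD_inj:
  assumes nz: "\<And>j. j \<in> {1..n} \<Longrightarrow> D j \<noteq> 0"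
    and "TD n D (lincomb n M a) = TD n D (lincomb n M b)"
  shows "lincomb n M a = lincomb n M b"
proof
  fix i
  show "lincomb n M a i = lincomb n M b i"
  proof (cases "i \<in> {1..n}")
    case True
    then have "D i * lincomb n M a i = D i * lincomb n M b i"
      using fun_cong[OF assms(2), of i] by (simp add: TD_def)
    then show ?thesis using nz[OF True] by simp
  next
    case False
    then show ?thesis unfolding lincomb_def by auto
  qed
qed

theorem proposition4p11:
  fixes G :: "('g, 'b) monoid_scheme"   \<comment> \<open>pi_1(X \ L, x_0)\<close>
    and n r :: nat                      \<comment> \<open>number of strands, number of components\<close>
    and comp :: "nat \<Rightarrow> nat"            \<comment> \<open>strand i lies on component K_(comp i)\<close>
    and src tgt :: "'c \<Rightarrow> nat"          \<comment> \<open>framed cords: start/end component\<close>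
    and gam :: "nat \<Rightarrow> nat \<Rightarrow> 'c"        \<comment> \<open>the cord gamma_ij\<close>
    and cord :: "nat \<Rightarrow> nat \<Rightarrow> 'g \<Rightarrow> 'c" \<comment> \<open>the cord p_i^-1 . h . p_j\<close>
    and eps1 eps2 :: "'c \<Rightarrow> 'k::field"   \<comment> \<open>the two augmentations on framed cords\<close>
    and d :: "nat \<Rightarrow> 'k"                 \<comment> \<open>the dilation in (k^*)^r\<close>
  assumes "group G"
    and comp: "\<And>i. i \<in> {1..n} \<Longrightarrow> comp i \<in> {1..r}"
    and endpoints: "\<And>c. src c \<in> {1..r} \<and> tgt c \<in> {1..r}"
    and gam: "\<And>i j. src (gam i j) = comp i \<and> tgt (gam i j) = comp j"
    and cord: "\<And>i j h. h \<in> carrier G \<Longrightarrow> src (cord i j h) = comp i \<and> tgt (cord i j h) = comp j"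
    and d_nz: "\<And>s. s \<in> {1..r} \<Longrightarrow> d s \<noteq> 0"
    and dilation: "\<And>c. eps2 c = d (src c) / d (tgt c) * eps1 c"
    and wd: "\<And>h. h \<in> carrier G \<Longrightarrow>
              rho_well_defined n (\<lambda>i j. eps1 (gam i j)) (\<lambda>i j. eps1 (cord i j h))"
  shows "rep_iso G
           (Vsub n (\<lambda>i j. eps1 (gam i j)))
           (\<lambda>h. rho_sub n (\<lambda>i j. eps1 (gam i j)) (\<lambda>i j. eps1 (cord i j h)))
           (Vsub n (\<lambda>i j. eps2 (gam i j)))
           (\<lambda>h. rho_sub n (\<lambda>i j. eps2 (gam i j)) (\<lambda>i j. eps2 (cord i j h)))"
proof -
  define D where "D = (\<lambda>i. d (comp i))"
  define M1 where "M1 = (\<lambda>i j. eps1 (gam i j))"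
  define M2 where "M2 = (\<lambda>i j. eps2 (gam i j))"
  define H1 where "H1 = (\<lambda>h i j. eps1 (cord i j h))"
  define H2 where "H2 = (\<lambda>h i j. eps2 (cord i j h))"
  have nz: "\<And>j. j \<in> {1..n} \<Longrightarrow> D j \<noteq> 0" using comp d_nz by (simp add: D_def)
  have MM: "\<And>i j. i \<in> {1..n} \<Longrightarrow> j \<in> {1..n} \<Longrightarrow> M2 i j = D i / D j * M1 i j"
    by (simp add: M1_def M2_def D_def dilation gam)
  have HH: "\<And>i j. h \<in> carrier G \<Longrightarrow> i \<in> {1..n} \<Longrightarrow> j \<in> {1..n} \<Longrightarrow> H2 h i j = D i / D j * H1 h i j" for h
    by (simp add: H1_def H2_def D_def dilation cord)
  note T1 = TD_lincomb[where n=n and D=D, OF nz MM] and T1' = TD_lincomb'[where n=n and D=D, OF nz MM]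
  have wd1: "h \<in> carrier G \<Longrightarrow> rho_well_defined n M1 (H1 h)" for h
    using wd by (simp add: M1_def H1_def)
  have wd2: "rho_well_defined n M2 (H2 h)" if h: "h \<in> carrier G" for h
    unfolding rho_well_defined_def
  proof (intro allI impI)
    fix c assume "lincomb n M2 c = (\<lambda>_. 0)"
    moreover have "TD n D (lincomb n M1 (\<lambda>_. 0)) = (\<lambda>_. 0)"
      unfolding TD_def lincomb_def by auto
    ultimately have "TD n D (lincomb n M1 (\<lambda>j. c j / D j)) = TD n D (lincomb n M1 (\<lambda>_. 0))"
      using T1'[where c=c] by simp
    then have "lincomb n M1 (\<lambda>j. c j / D j) = lincomb n M1 (\<lambda>_. 0)"
      using TD_inj[where n=n and D=D, OF nz] by blast
    then have "lincomb n (H1 h) (\<lambda>j. c j / D j) = lincomb n (H1 h) (\<lambda>_. 0)"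
      by (rule wd_eq[OF wd1[OF h]])
    then have "TD n D (lincomb n (H1 h) (\<lambda>j. c j / D j)) = (\<lambda>_. 0)"
      by (simp add: TD_def lincomb_def fun_eq_iff)
    then show "lincomb n (H2 h) c = (\<lambda>_. 0)"
      using TD_lincomb'[where n=n and D=D, OF nz HH[OF h]] by simp
  qed
  have "rep_iso G (Vsub n M1) (\<lambda>h. rho_sub n M1 (H1 h)) (Vsub n M2) (\<lambda>h. rho_sub n M2 (H2 h))"
    unfolding rep_iso_def
  proof (intro exI[of _ "TD n D"] conjI ballI allI)
    show "bij_betw (TD n D) (Vsub n M1) (Vsub n M2)"
      unfolding bij_betw_def
    proof
      show "inj_on (TD n D) (Vsub n M1)"
        unfolding Vsub_def inj_on_def using TD_inj[where n=n and D=D, OF nz] by blast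
      show "TD n D ` Vsub n M1 = Vsub n M2"
        unfolding Vsub_def
      proof
        show "TD n D ` range (lincomb n M1) \<subseteq> range (lincomb n M2)"
          using T1 by auto
        show "range (lincomb n M2) \<subseteq> TD n D ` range (lincomb n M1)"
          using T1' by auto
      qed
    qed
  next
    fix u v assume "u \<in> Vsub n M1" "v \<in> Vsub n M1"
    show "TD n D (\<lambda>i. u i + v i) = (\<lambda>i. TD n D u i + TD n D v i)"
      by (auto simp: TD_def algebra_simps)
  next
    fix a u assume "u \<in> Vsub n M1"
    show "TD n D (\<lambda>i. a * u i) = (\<lambda>i. a * TD n D u i)"
      by (auto simp: TD_def algebra_simps)
  next
    fix h v assume h: "h \<in> carrier G" and v: "v \<in> Vsub n M1"
    then obtain c where c: "v = lincomb n M1 c" by (auto simp: Vsub_def)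
    show "TD n D (rho_sub n M1 (H1 h) v) = rho_sub n M2 (H2 h) (TD n D v)"
      using c rho_sub_eq[OF wd1[OF h]] rho_sub_eq[OF wd2[OF h]] T1
        TD_lincomb[where n=n and D=D, OF nz HH[OF h]] by simp
  qed
  then show ?thesis by (simp add: M1_def M2_def H1_def H2_def)
qed

end
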